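(* Let $R$ be a commutative Noetherian ring, $M$ a faithful primeful $R$-module having at least one prime submodule, $X=\mathrm{Spec}(M)$, $N$ an $R$-module, $K\le M$, and $U=X\setminus V(K)$. Then $\Gamma_{(K:M)}(N)=\ker(\epsilon_N^U)$; in particular $\ker(\epsilon_N^U)$ is $(K:M)$-torsion.
   Context: For a submodule $L$ of an $R$-module $M$, $(L:M)=\{r\in R\mid rM\subseteq L\}$. A submodule $P$ of $M$ is prime if $P\neq M$ and whenever $rm\in P$ ($r\in R$, $m\in M$) then $r\in (P:M)$ or $m\in P$. $\mathrm{Spec}(M)$ is the set of prime submodules. $M$ is faithful if $\mathrm{Ann}_R(M)=0$; primeful if $M=0$ or $\mathrm{Spec}(M)\to\mathrm{Spec}(R/\mathrm{Ann}(M))$, $P\mapsto(P:M)/\mathrm{Ann}(M)$, is surjective. For $L\le M$, $V(L)=\{P\in X\mid (P:M)\supseteq (L:M)\}$; these are the closed sets of the Zariski topology. For open $U\subseteq X$, $\mathrm{Supp}(U)=\{(P:M)\mid P\in U\}$. $\mathcal{A}(N,M)(U)$ is the $R$-module of families $(\gamma_{\mathfrak p})_{\mathfrak p\in\mathrm{Supp}(U)}\in\prod_{\mathfrak p\in\mathrm{Supp}(U)}N_{\mathfrak p}$ such that for each $Q\in U$ there exist an open neighbourhood $W\subseteq U$ of $Q$ and $s\in R$, $m\in N$ with $s\notin (P:M)$ and $\gamma_{(P:M)}=m/s$ for every $P\in W$. $\epsilon_N^U:N\to\mathcal{A}(N,M)(U)$ is $n\mapsto(n/1)_{\mathfrak p\in\mathrm{Supp}(U)}$.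 For an ideal $I$, $\Gamma_I(H)=\bigcup_{n\ge1}(0:_H I^n)$, and $H$ is $I$-torsion if $H=\Gamma_I(H)$. *)

theory Defs
  imports Complex_Main
begin

definition is_ideal :: "'r::comm_ring_1 set \<Rightarrow> bool" where
  "is_ideal I \<longleftrightarrow> 0 \<in> I \<and> (\<forall>x\<in>I. \<forall>y\<in>I. x + y \<in> I) \<and> (\<forall>r. \<forall>x\<in>I. r * x \<in> I)"

definition prime_ideal :: "'r::comm_ring_1 set \<Rightarrow> bool" where
  "prime_ideal p \<longleftrightarrow> is_ideal p \<and> p \<noteq> UNIV \<and> (\<forall>a b. a * b \<in> p \<longrightarrow> a \<in> p \<or> b \<in> p)"

definition ideal_gen :: "'r::comm_ring_1 set \<Rightarrow> 'r set" where
  "ideal_gen F = {(\<Sum>i<k. c i * x i) | (k::nat) c x. \<forall>i<k. x i \<in> F}"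

fun ideal_pow :: "'r::comm_ring_1 set \<Rightarrow> nat \<Rightarrow> 'r set" where
  "ideal_pow I 0 = UNIV"
| "ideal_pow I (Suc n) = ideal_gen {a * b | a b. a \<in> I \<and> b \<in> ideal_pow I n}"

definition noetherian_ring :: "'r::comm_ring_1 itself \<Rightarrow> bool" where
  "noetherian_ring _ \<longleftrightarrow> (\<forall>I::'r set. is_ideal I \<longrightarrow> (\<exists>F. finite F \<and> I = ideal_gen F))"

section \<open>Modules: an R-module is a type 'm with a scalar action s satisfying module s\<close>

definition colon :: "('r::comm_ring_1 \<Rightarrow> 'm::ab_group_add \<Rightarrow> 'm) \<Rightarrow> 'm set \<Rightarrow> 'r set" where
  "colon s L = {r. \<forall>m. s r m \<in> L}"

definition ann :: "('r::comm_ring_1 \<Rightarrow> 'm::ab_group_add \<Rightarrow> 'm) \<Rightarrow> 'r set" where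
  "ann s = {r. \<forall>m. s r m = 0}"

definition faithful :: "('r::comm_ring_1 \<Rightarrow> 'm::ab_group_add \<Rightarrow> 'm) \<Rightarrow> bool" where
  "faithful s \<longleftrightarrow> ann s = {0}"

definition prime_submodule :: "('r::comm_ring_1 \<Rightarrow> 'm::ab_group_add \<Rightarrow> 'm) \<Rightarrow> 'm set \<Rightarrow> bool" where
  "prime_submodule s P \<longleftrightarrow> module.subspace s P \<and> P \<noteq> UNIV \<and>
     (\<forall>r m. s r m \<in> P \<longrightarrow> r \<in> colon s P \<or> m \<in> P)"

definition Spec_mod :: "('r::comm_ring_1 \<Rightarrow> 'm::ab_group_add \<Rightarrow> 'm) \<Rightarrow> 'm set set" where
  "Spec_mod s = {P. prime_submodule s P}"

text \<open>Primeful: M = 0, or the map P |-> (P:M)/Ann(M) from Spec(M) to Spec(R/Ann(M)) is onto;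
  via the correspondence Spec(R/Ann M) = primes of R containing Ann M.\<close>
definition primeful :: "('r::comm_ring_1 \<Rightarrow> 'm::ab_group_add \<Rightarrow> 'm) \<Rightarrow> bool" where
  "primeful s \<longleftrightarrow> (UNIV :: 'm set) = {0} \<or>
     (\<forall>p. prime_ideal p \<and> ann s \<subseteq> p \<longrightarrow> (\<exists>P\<in>Spec_mod s. colon s P = p))"

definition V_mod :: "('r::comm_ring_1 \<Rightarrow> 'm::ab_group_add \<Rightarrow> 'm) \<Rightarrow> 'm set \<Rightarrow> 'm set set" where
  "V_mod s L = {P \<in> Spec_mod s. colon s L \<subseteq> colon s P}"

definition zariski_open :: "('r::comm_ring_1 \<Rightarrow> 'm::ab_group_add \<Rightarrow> 'm) \<Rightarrow> 'm set set \<Rightarrow> bool" where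
  "zariski_open s W \<longleftrightarrow> (\<exists>L. module.subspace s L \<and> W = Spec_mod s - V_mod s L)"

definition Supp :: "('r::comm_ring_1 \<Rightarrow> 'm::ab_group_add \<Rightarrow> 'm) \<Rightarrow> 'm set set \<Rightarrow> 'r set set" where
  "Supp s U = (\<lambda>P. colon s P) ` U"

text \<open>The fraction m/s in N_p, represented as the equivalence class of (m,s).\<close>
definition frac :: "('r::comm_ring_1 \<Rightarrow> 'n::ab_group_add \<Rightarrow> 'n) \<Rightarrow> 'r set \<Rightarrow> 'n \<Rightarrow> 'r \<Rightarrow> ('n \<times> 'r) set" where
  "frac t p m u = {(m', u'). u' \<notin> p \<and> (\<exists>v. v \<notin> p \<and> t v (t u' m - t u m') = 0)}"

definition localization :: "('r::comm_ring_1 \<Rightarrow> 'n::ab_group_add \<Rightarrow> 'n) \<Rightarrow> 'r set \<Rightarrow> ('n \<times> 'r) set set" where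
  "localization t p = {frac t p m u | m u. u \<notin> p}"

text \<open>Sections A(N,M)(U): families indexed by Supp(U) (extensional, undefined outside).\<close>
definition sections ::
  "('r::comm_ring_1 \<Rightarrow> 'm::ab_group_add \<Rightarrow> 'm) \<Rightarrow> ('r \<Rightarrow> 'n::ab_group_add \<Rightarrow> 'n) \<Rightarrow> 'm set set
     \<Rightarrow> ('r set \<Rightarrow> ('n \<times> 'r) set) set" where
  "sections s t U = {\<gamma>. (\<forall>p. p \<notin> Supp s U \<longrightarrow> \<gamma> p = undefined) \<and>
      (\<forall>p\<in>Supp s U. \<gamma> p \<in> localization t p) \<and>
      (\<forall>Q\<in>U. \<exists>W u m. zariski_open s W \<and> Q \<in> W \<and> W \<subseteq> U \<and>
          (\<forall>P\<in>W. u \<notin> colon s P \<and> \<gamma> (colon s P) = frac t (colon s P) m u))}"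

definition eps ::
  "('r::comm_ring_1 \<Rightarrow> 'm::ab_group_add \<Rightarrow> 'm) \<Rightarrow> ('r \<Rightarrow> 'n::ab_group_add \<Rightarrow> 'n) \<Rightarrow> 'm set set
     \<Rightarrow> 'n \<Rightarrow> ('r set \<Rightarrow> ('n \<times> 'r) set)" where
  "eps s t U n = (\<lambda>p. if p \<in> Supp s U then frac t p n 1 else undefined)"

definition ker_eps ::
  "('r::comm_ring_1 \<Rightarrow> 'm::ab_group_add \<Rightarrow> 'm) \<Rightarrow> ('r \<Rightarrow> 'n::ab_group_add \<Rightarrow> 'n) \<Rightarrow> 'm set set \<Rightarrow> 'n set" where
  "ker_eps s t U = {n. eps s t U n = eps s t U 0}"

definition Gamma :: "('r::comm_ring_1 \<Rightarrow> 'n::ab_group_add \<Rightarrow> 'n) \<Rightarrow> 'r set \<Rightarrow> 'n set \<Rightarrow> 'n set" where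
  "Gamma t I H = {h \<in> H. \<exists>k\<ge>1. \<forall>r\<in>ideal_pow I k. t r h = 0}"

definition torsion :: "('r::comm_ring_1 \<Rightarrow> 'n::ab_group_add \<Rightarrow> 'n) \<Rightarrow> 'r set \<Rightarrow> 'n set \<Rightarrow> bool" where
  "torsion t I H \<longleftrightarrow> H = Gamma t I H"

end

theory Submission
  imports Defs
begin


lemma ideal_sum: "is_ideal J \<Longrightarrow> (\<forall>i<(k::nat). f i \<in> J) \<Longrightarrow> (\<Sum>i<k. f i) \<in> J"
  by (induction k) (auto simp: is_ideal_def)

lemma ideal_mul: "is_ideal J \<Longrightarrow> x \<in> J \<Longrightarrow> r * x \<in> J"
  by (auto simp: is_ideal_def)

lemma ideal_mul2: "is_ideal J \<Longrightarrow> x \<in> J \<Longrightarrow> x * r \<in> J"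
  using ideal_mul[of J x r] by (simp add: mult.commute)

lemma ideal_add: "is_ideal J \<Longrightarrow> x \<in> J \<Longrightarrow> y \<in> J \<Longrightarrow> x + y \<in> J"
  by (auto simp: is_ideal_def)

lemma ideal_gen_memI: "(\<forall>i<(k::nat). x i \<in> F) \<Longrightarrow> (\<Sum>i<k. c i * x i) \<in> ideal_gen F"
  unfolding ideal_gen_def by blast

lemma ideal_gen_memE:
  assumes "y \<in> ideal_gen F"
  obtains k :: nat and c x where "y = (\<Sum>i<k. c i * x i)" "\<forall>i<k. x i \<in> F"
  using assms unfolding ideal_gen_def by blast

lemma ideal_gen_sub: "is_ideal J \<Longrightarrow> G \<subseteq> J \<Longrightarrow> ideal_gen G \<subseteq> J"
proof
  fix y assume J: "is_ideal J" "G \<subseteq> J" and "y \<in> ideal_gen G"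
  from \<open>y \<in> ideal_gen G\<close> obtain k :: nat and c x where "y = (\<Sum>i<k. c i * x i)" "\<forall>i<k. x i \<in> G"
    by (rule ideal_gen_memE)
  then show "y \<in> J" using J by (auto intro!: ideal_sum ideal_mul)
qed

lemma ideal_gen_base: "g \<in> G \<Longrightarrow> g \<in> ideal_gen G"
proof -
  assume "g \<in> G"
  then have "(\<Sum>i<(1::nat). 1 * g) \<in> ideal_gen G" by (intro ideal_gen_memI) auto
  then show ?thesis by simp
qed

lemma ideal_UNIV: "is_ideal J \<Longrightarrow> 1 \<in> J \<Longrightarrow> J = UNIV"
  using ideal_mul[of J 1] by auto

lemma pow_in_ideal_pow: "a \<in> I \<Longrightarrow> a ^ k \<in> ideal_pow I k"
  by (induction k) (auto intro!: ideal_gen_base)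


lemma ideal_gen_zero: "0 \<in> ideal_gen F"
  using ideal_gen_memI[of 0 _ F] by simp

lemma ideal_gen_insert_step:
  assumes "y \<in> ideal_gen F" "g \<in> F"
  shows "y + c * g \<in> ideal_gen F"
proof -
  from assms(1) obtain k :: nat and cc x where y: "y = (\<Sum>i<k. cc i * x i)" and x: "\<forall>i<k. x i \<in> F"
    by (rule ideal_gen_memE)
  have "(\<Sum>i<Suc k. (cc(k:=c)) i * (x(k:=g)) i) = (\<Sum>i<k. (cc(k:=c)) i * (x(k:=g)) i) + c * g"
    by (rule trans[OF sum.lessThan_Suc]) simp
  also have "(\<Sum>i<k. (cc(k:=c)) i * (x(k:=g)) i) = y"
    unfolding y by (rule sum.cong) auto
  finally have eq: "y + c * g = (\<Sum>i<Suc k. (cc(k:=c)) i * (x(k:=g)) i)" by simp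
  have "\<forall>i<Suc k. (x(k:=g)) i \<in> F" using x assms(2) by (auto simp: less_Suc_eq)
  then show ?thesis unfolding eq by (rule ideal_gen_memI)
qed

lemma ideal_gen_insert:
  assumes "z \<in> ideal_gen (insert f F)"
  shows "\<exists>c y. y \<in> ideal_gen F \<and> z = c * f + y"
proof -
  from assms obtain k :: nat and cc x where z: "z = (\<Sum>i<k. cc i * x i)" and x: "\<forall>i<k. x i \<in> insert f F"
    by (rule ideal_gen_memE)
  have "\<forall>i\<le>k. \<exists>c y. y \<in> ideal_gen F \<and> (\<Sum>j<i. cc j * x j) = c * f + y"
  proof (intro allI impI)
    fix i assume "i \<le> k" then show "\<exists>c y. y \<in> ideal_gen F \<and> (\<Sum>j<i. cc j * x j) = c * f + y"
    proof (induction i)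
      case 0
      then show ?case using ideal_gen_zero by (intro exI[of _ 0] exI[of _ 0]) auto
    next
      case (Suc i)
      then obtain c y where cy: "y \<in> ideal_gen F" "(\<Sum>j<i. cc j * x j) = c * f + y" by auto
      have xi: "x i \<in> insert f F" using x Suc by auto
      show ?case
      proof (cases "x i = f")
        case True
        then show ?thesis using cy by (intro exI[of _ "c + cc i"] exI[of _ y]) (simp add: algebra_simps)
      next
        case False
        then have "x i \<in> F" using xi by auto
        then have "y + cc i * x i \<in> ideal_gen F" using ideal_gen_insert_step cy by blast
        then show ?thesis using cy by (intro exI[of _ c] exI[of _ "y + cc i * x i"]) (simp add: algebra_simps)
      qed
    qed
  qed
  then show ?thesis using z by auto
qed

lemma ideal_gen_empty: "z \<in> ideal_gen {} \<Longrightarrow> z = 0"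
  by (erule ideal_gen_memE) (metis lessThan_iff not_gr0 lessThan_0 sum.empty empty_iff)



lemma ideal_sum_set:
  assumes "is_ideal J" "finite A" "\<forall>i\<in>A. f i \<in> J" shows "(\<Sum>i\<in>A. f i) \<in> J"
  using assms(2,1,3) by (induction A rule: finite_induct) (auto simp: is_ideal_def)

definition Pp :: "'r::comm_ring_1 set \<Rightarrow> nat \<Rightarrow> 'r set \<Rightarrow> bool" where
  "Pp A k J \<longleftrightarrow> (\<forall>S a. finite (S::nat set) \<and> k \<le> card S \<and> (\<forall>i\<in>S. a i \<in> A) \<longrightarrow> (\<Prod>i\<in>S. a i) \<in> J)"

lemma Pp_empty: "is_ideal J \<Longrightarrow> Pp (ideal_gen {}) 1 J"
  unfolding Pp_def
proof (intro allI impI)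
  fix S :: "nat set" and a :: "nat \<Rightarrow> 'a"
  assume J: "is_ideal J" and h: "finite S \<and> 1 \<le> card S \<and> (\<forall>i\<in>S. a i \<in> ideal_gen {})"
  then have "S \<noteq> {}" by auto
  then obtain i where "i \<in> S" by auto
  with h have "a i = 0" using ideal_gen_empty by blast
  then have "(\<Prod>i\<in>S. a i) = 0" using h \<open>i \<in> S\<close> by (meson prod_zero)
  then show "(\<Prod>i\<in>S. a i) \<in> J" using J by (simp add: is_ideal_def)
qed

lemma Pp_insert:
  assumes J: "is_ideal J" and fm: "f ^ m \<in> J" and P: "Pp (ideal_gen F) k J"
  shows "Pp (ideal_gen (insert f F)) (m + k) J"
  unfolding Pp_def
proof (intro allI impI)
  fix S :: "nat set" and a :: "nat \<Rightarrow> 'a"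
  assume h: "finite S \<and> m + k \<le> card S \<and> (\<forall>i\<in>S. a i \<in> ideal_gen (insert f F))"
  then have fin: "finite S" and cs: "m + k \<le> card S" by auto
  have "\<forall>i\<in>S. \<exists>cy. snd cy \<in> ideal_gen F \<and> a i = fst cy * f + snd cy"
  proof
    fix i assume "i \<in> S"
    then have "a i \<in> ideal_gen (insert f F)" using h by blast
    from ideal_gen_insert[OF this] obtain c y where "y \<in> ideal_gen F" "a i = c * f + y" by blast
    then show "\<exists>cy. snd cy \<in> ideal_gen F \<and> a i = fst cy * f + snd cy" by (intro exI[of _ "(c,y)"]) simp
  qed
  from bchoice[OF this] obtain cy where cy: "\<forall>i\<in>S. snd (cy i) \<in> ideal_gen F \<and> a i = fst (cy i) * f + snd (cy i)"
    by blast
  define c where "c i = fst (cy i)" for i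
  define y where "y i = snd (cy i)" for i
  have ay: "\<forall>i\<in>S. y i \<in> ideal_gen F \<and> a i = c i * f + y i" using cy c_def y_def by auto
  have "(\<Prod>i\<in>S. a i) = (\<Prod>i\<in>S. c i * f + y i)" using ay by (intro prod.cong) auto
  also have "\<dots> = (\<Sum>X\<in>Pow S. (\<Prod>i\<in>X. c i * f) * (\<Prod>i\<in>S-X. y i))"
    by (rule prod_add[OF fin])
  also have "\<dots> \<in> J"
  proof (rule ideal_sum_set[OF J])
    show "finite (Pow S)" using fin by simp
    show "\<forall>X\<in>Pow S. (\<Prod>i\<in>X. c i * f) * (\<Prod>i\<in>S - X. y i) \<in> J"
    proof
      fix X assume X: "X \<in> Pow S"
      then have finX: "finite X" using fin finite_subset by auto
      show "(\<Prod>i\<in>X. c i * f) * (\<Prod>i\<in>S - X. y i) \<in> J"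
      proof (cases "m \<le> card X")
        case True
        have "(\<Prod>i\<in>X. c i * f) = (\<Prod>i\<in>X. c i) * f ^ card X"
          by (simp add: prod.distrib)
        also have "\<dots> = ((\<Prod>i\<in>X. c i) * f ^ (card X - m)) * f ^ m"
          using True by (simp add: power_add[symmetric] mult.assoc)
        finally have "(\<Prod>i\<in>X. c i * f) \<in> J" using ideal_mul[OF J fm] by simp
        then show ?thesis using ideal_mul2[OF J] by blast
      next
        case False
        have "card (S - X) = card S - card X" using X fin by (simp add: card_Diff_subset finite_subset)
        then have "k \<le> card (S - X)" using False cs by linarith
        moreover have "\<forall>i\<in>S-X. y i \<in> ideal_gen F" using ay by auto
        ultimately have "(\<Prod>i\<in>S - X. y i) \<in> J" using P[unfolded Pp_def, rule_format, of "S - X" y] fin by simp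
        then show ?thesis using ideal_mul[OF J] by blast
      qed
    qed
  qed
  finally show "(\<Prod>i\<in>S. a i) \<in> J" .
qed

lemma Pp_finite:
  assumes "finite F" "is_ideal J" "\<forall>f\<in>F. \<exists>m. f ^ m \<in> J"
  shows "\<exists>k. Pp (ideal_gen F) k J"
  using assms
proof (induction F rule: finite_induct)
  case empty
  then show ?case using Pp_empty by blast
next
  case (insert f F)
  then obtain k where k: "Pp (ideal_gen F) k J" by auto
  from insert obtain m where "f ^ m \<in> J" by auto
  then show ?case using Pp_insert[OF insert(4) _ k] by blast
qed

lemma colon_ideal: "is_ideal J \<Longrightarrow> is_ideal {b. \<forall>a\<in>I. a * b \<in> J}"
  unfolding is_ideal_def by (auto simp: distrib_left mult.left_commute)

lemma Pp_pow:
  "is_ideal J \<Longrightarrow> Pp I n J \<Longrightarrow> ideal_pow I n \<subseteq> J"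
proof (induction n arbitrary: J)
  case 0
  have "1 \<in> J" using 0(2)[unfolded Pp_def, rule_format, of "{}" "\<lambda>_. 0"] by simp
  then show ?case using ideal_UNIV[OF 0(1)] by simp
next
  case (Suc n)
  define J' where "J' = {b. \<forall>a\<in>I. a * b \<in> J}"
  have J': "is_ideal J'" unfolding J'_def using colon_ideal[OF Suc(2)] .
  have "Pp I n J'"
    unfolding Pp_def
  proof (intro allI impI)
    fix S :: "nat set" and a :: "nat \<Rightarrow> 'a"
    assume h: "finite S \<and> n \<le> card S \<and> (\<forall>i\<in>S. a i \<in> I)"
    have "\<exists>j. j \<notin> S" using h ex_new_if_finite[OF infinite_UNIV_nat] by simp
    then obtain j where j: "j \<notin> S" by blast
    show "(\<Prod>i\<in>S. a i) \<in> J'"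
      unfolding J'_def
    proof (intro CollectI ballI)
      fix x assume x: "x \<in> I"
      have "(\<Prod>i\<in>insert j S. (a(j:=x)) i) = x * (\<Prod>i\<in>S. (a(j:=x)) i)"
        using h j by simp
      also have "(\<Prod>i\<in>S. (a(j:=x)) i) = (\<Prod>i\<in>S. a i)" using j by (intro prod.cong) auto
      finally have eq: "(\<Prod>i\<in>insert j S. (a(j:=x)) i) = x * (\<Prod>i\<in>S. a i)" .
      have "Suc n \<le> card (insert j S)" using h j by simp
      moreover have "\<forall>i\<in>insert j S. (a(j:=x)) i \<in> I" using h x by auto
      ultimately have "(\<Prod>i\<in>insert j S. (a(j:=x)) i) \<in> J" using Suc(3)[unfolded Pp_def, rule_format, of "insert j S" "a(j:=x)"] h by simp
      then show "x * (\<Prod>i\<in>S. a i) \<in> J" using eq by simp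
    qed
  qed
  then have "ideal_pow I n \<subseteq> J'" by (rule Suc.IH[OF J'])
  then have "{a * b |a b. a \<in> I \<and> b \<in> ideal_pow I n} \<subseteq> J" unfolding J'_def by auto
  then show ?case using ideal_gen_sub[OF Suc(2)] by (simp only: ideal_pow.simps)
qed



lemma krull:
  fixes J :: "'r::comm_ring_1 set"
  assumes J: "is_ideal J" and na: "\<forall>k. a ^ k \<notin> J"
  shows "\<exists>p. prime_ideal p \<and> J \<subseteq> p \<and> a \<notin> p"
proof -
  define A where "A = {Q. is_ideal Q \<and> J \<subseteq> Q \<and> (\<forall>k. a ^ k \<notin> Q)}"
  have JA: "J \<in> A" using J na by (simp add: A_def)
  have "\<forall>C\<in>chains A. \<exists>U\<in>A. \<forall>X\<in>C. X \<subseteq> U"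
  proof
    fix C assume C: "C \<in> chains A"
    show "\<exists>U\<in>A. \<forall>X\<in>C. X \<subseteq> U"
    proof (cases "C = {}")
      case True then show ?thesis using JA by blast
    next
      case False
      have CA: "C \<subseteq> A" and ch: "\<forall>X\<in>C. \<forall>Y\<in>C. X \<subseteq> Y \<or> Y \<subseteq> X"
        using C unfolding chains_def chain_subset_def by auto
      have "\<Union>C \<in> A"
        unfolding A_def
      proof (intro CollectI conjI allI)
        show "is_ideal (\<Union>C)"
          unfolding is_ideal_def
        proof (intro conjI ballI allI)
          obtain X where "X \<in> C" using False by blast
          then have "0 \<in> X" using CA by (auto simp: A_def is_ideal_def)
          then show "0 \<in> \<Union>C" using \<open>X \<in> C\<close> by blast
        next
          fix x y assume "x \<in> \<Union>C" "y \<in> \<Union>C"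
          then obtain X Y where XY: "X \<in> C" "Y \<in> C" "x \<in> X" "y \<in> Y" by blast
          show "x + y \<in> \<Union>C"
          proof (cases "X \<subseteq> Y")
            case True
            moreover have "is_ideal Y" using XY CA by (auto simp: A_def)
            ultimately have "x + y \<in> Y" using XY ideal_add by blast
            then show ?thesis using XY by blast
          next
            case False
            then have "Y \<subseteq> X" using ch XY by blast
            moreover have "is_ideal X" using XY CA by (auto simp: A_def)
            ultimately have "x + y \<in> X" using XY ideal_add by blast
            then show ?thesis using XY by blast
          qed
        next
          fix r x assume "x \<in> \<Union>C"
          then obtain X where X: "X \<in> C" "x \<in> X" by blast
          then have "r * x \<in> X" using CA by (auto simp: A_def is_ideal_def)
          then show "r * x \<in> \<Union>C" using X by blast
        qed
      next
        obtain X where "X \<in> C" using False by blast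
        then show "J \<subseteq> \<Union>C" using CA by (auto simp: A_def)
      next
        fix k show "a ^ k \<notin> \<Union>C" using CA by (auto simp: A_def)
      qed
      then show ?thesis by blast
    qed
  qed
  from Zorn_Lemma2[OF this] obtain P where PA: "P \<in> A" and max: "\<forall>X\<in>A. P \<subseteq> X \<longrightarrow> X = P"
    by blast
  have Pi: "is_ideal P" and JP: "J \<subseteq> P" and nP: "\<forall>k. a ^ k \<notin> P" using PA by (auto simp: A_def)
  have ext: "\<exists>i. a ^ i \<in> {p + r * x |p r. p \<in> P}" if "x \<notin> P" for x
  proof (rule ccontr)
    assume nex: "\<not> ?thesis"
    define Q where "Q = {p + r * x |p r. p \<in> P}"
    have "is_ideal Q"
      unfolding is_ideal_def Q_def
    proof (intro conjI ballI allI)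
      show "0 \<in> {p + r * x |p r. p \<in> P}" using Pi by (intro CollectI exI[of _ 0]) (auto simp: is_ideal_def)
    next
      fix u v assume "u \<in> {p + r * x |p r. p \<in> P}" "v \<in> {p + r * x |p r. p \<in> P}"
      then obtain p1 r1 p2 r2 where "u = p1 + r1 * x" "v = p2 + r2 * x" "p1 \<in> P" "p2 \<in> P" by blast
      then show "u + v \<in> {p + r * x |p r. p \<in> P}"
        using ideal_add[OF Pi] by (intro CollectI exI[of _ "p1 + p2"] exI[of _ "r1 + r2"]) (auto simp: algebra_simps)
    next
      fix s u assume "u \<in> {p + r * x |p r. p \<in> P}"
      then obtain p1 r1 where "u = p1 + r1 * x" "p1 \<in> P" by blast
      then show "s * u \<in> {p + r * x |p r. p \<in> P}"
        using ideal_mul[OF Pi] by (intro CollectI exI[of _ "s * p1"] exI[of _ "s * r1"]) (auto simp: algebra_simps)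
    qed
    moreover have "P \<subseteq> Q"
    proof
      fix p assume "p \<in> P" then show "p \<in> Q" unfolding Q_def by (intro CollectI exI[of _ p] exI[of _ 0]) simp
    qed
    moreover have "\<forall>k. a ^ k \<notin> Q" using nex Q_def by blast
    ultimately have "Q \<in> A" using JP by (auto simp: A_def)
    moreover have "x \<in> Q" unfolding Q_def using Pi by (intro CollectI exI[of _ 0] exI[of _ 1]) (auto simp: is_ideal_def)
    ultimately show False using max \<open>P \<subseteq> Q\<close> that by blast
  qed
  have "prime_ideal P"
    unfolding prime_ideal_def
  proof (intro conjI allI impI)
    show "is_ideal P" by (rule Pi)
    show "P \<noteq> UNIV" using nP[rule_format, of 0] by auto
  next
    fix x y assume xy: "x * y \<in> P"
    show "x \<in> P \<or> y \<in> P"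
    proof (rule ccontr)
      assume "\<not> (x \<in> P \<or> y \<in> P)"
      then have "x \<notin> P" "y \<notin> P" by auto
      from ext[OF this(1)] obtain i p1 r1 where 1: "a ^ i = p1 + r1 * x" "p1 \<in> P" by blast
      from ext[OF \<open>y \<notin> P\<close>] obtain j p2 r2 where 2: "a ^ j = p2 + r2 * y" "p2 \<in> P" by blast
      have "a ^ (i + j) = p1 * (p2 + r2 * y) + (r1 * x * p2 + (r1 * r2) * (x * y))"
        by (simp add: power_add 1 2 algebra_simps)
      also have "\<dots> \<in> P"
      proof -
        have a1: "p1 * (p2 + r2 * y) \<in> P" by (rule ideal_mul2[OF Pi 1(2)])
        have a2: "r1 * x * p2 \<in> P" by (rule ideal_mul[OF Pi 2(2)])
        have a3: "(r1 * r2) * (x * y) \<in> P" by (rule ideal_mul[OF Pi xy])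
        show ?thesis by (rule ideal_add[OF Pi a1 ideal_add[OF Pi a2 a3]])
      qed
      finally show False using nP by blast
    qed
  qed
  then show ?thesis using JP nP[rule_format, of 1] by auto
qed



lemma colon_is_ideal:
  assumes ms: "module s" and K: "module.subspace s K"
  shows "is_ideal (colon s K)"
  unfolding is_ideal_def colon_def
proof (intro conjI ballI allI CollectI)
  show "s 0 m \<in> K" for m using module.scale_zero_left[OF ms] module.subspace_0[OF ms K] by simp
next
  fix x y m assume "x \<in> {r. \<forall>m. s r m \<in> K}" "y \<in> {r. \<forall>m. s r m \<in> K}"
  then show "s (x + y) m \<in> K"
    using module.scale_left_distrib[OF ms] module.subspace_add[OF ms K] by simp
next
  fix r x m assume "x \<in> {r. \<forall>m. s r m \<in> K}"
  then show "s (r * x) m \<in> K"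
    using module.scale_scale[OF ms, symmetric] module.subspace_scale[OF ms K] by simp
qed

lemma prime_colon:
  assumes ms: "module s" and P: "prime_submodule s P"
  shows "prime_ideal (colon s P)"
  unfolding prime_ideal_def
proof (intro conjI allI impI)
  have sub: "module.subspace s P" and ne: "P \<noteq> UNIV"
    and pr: "\<forall>r m. s r m \<in> P \<longrightarrow> r \<in> colon s P \<or> m \<in> P"
    using P by (auto simp: prime_submodule_def)
  show "is_ideal (colon s P)" by (rule colon_is_ideal[OF ms sub])
  show "colon s P \<noteq> UNIV"
  proof
    assume "colon s P = UNIV"
    then have "\<forall>m. s 1 m \<in> P" unfolding colon_def by auto
    then show False using ne module.scale_one[OF ms] by auto
  qed
  fix a b assume ab: "a * b \<in> colon s P"
  show "a \<in> colon s P \<or> b \<in> colon s P"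
  proof (cases "a \<in> colon s P")
    case True then show ?thesis by simp
  next
    case False
    note na = False
    have "\<forall>m. s b m \<in> P"
    proof
      fix m
      have "s a (s b m) \<in> P" using ab module.scale_scale[OF ms] unfolding colon_def by simp
      then show "s b m \<in> P" using pr na by blast
    qed
    then show ?thesis unfolding colon_def by simp
  qed
qed

lemma ann_elem_ideal:
  assumes mt: "module t"
  shows "is_ideal {r. t r n = 0}"
  unfolding is_ideal_def
  using module.scale_left_distrib[OF mt] module.scale_scale[OF mt, symmetric] module.scale_zero_left[OF mt]
    module.scale_zero_right[OF mt]
  by auto

lemma prime_pow: "prime_ideal p \<Longrightarrow> a \<notin> p \<Longrightarrow> a ^ k \<notin> p"
proof (induction k)
  case 0
  then show ?case using ideal_UNIV[of p] by (auto simp: prime_ideal_def)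
next
  case (Suc k)
  then show ?case by (auto simp: prime_ideal_def)
qed

lemma frac_eq:
  assumes mt: "module t" and p: "prime_ideal p"
  shows "frac t p n 1 = frac t p 0 1 \<longleftrightarrow> (\<exists>v. v \<notin> p \<and> t v n = 0)"
proof
  have one: "(1::'a) \<notin> p" using p ideal_UNIV by (auto simp: prime_ideal_def)
  assume eq: "frac t p n 1 = frac t p 0 1"
  have "(n, 1) \<in> frac t p n 1" unfolding frac_def using one module.scale_one[OF mt]
    module.scale_zero_right[OF mt] by auto
  then have "(n, 1) \<in> frac t p 0 1" using eq by simp
  then obtain v where "v \<notin> p" "t v (t 1 0 - t 1 n) = 0" unfolding frac_def by auto
  then show "\<exists>v. v \<notin> p \<and> t v n = 0"
    using module.scale_one[OF mt] module.scale_zero_right[OF mt] module.scale_minus_right[OF mt] by auto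
next
  assume "\<exists>v. v \<notin> p \<and> t v n = 0"
  then obtain v where v: "v \<notin> p" "t v n = 0" by blast
  have pr: "\<And>x y. x \<notin> p \<Longrightarrow> y \<notin> p \<Longrightarrow> x * y \<notin> p" using p by (auto simp: prime_ideal_def)
  note simps = module.scale_one[OF mt] module.scale_zero_right[OF mt] module.scale_minus_right[OF mt]
    module.scale_right_diff_distrib[OF mt] module.scale_scale[OF mt]
  show "frac t p n 1 = frac t p 0 1"
  proof (rule set_eqI)
    fix z :: "'b \<times> 'a"
    obtain m' u' where z: "z = (m', u')" by (cases z)
    have A: "(\<exists>w. w \<notin> p \<and> t w (t u' n - t 1 m') = 0) \<longleftrightarrow> (\<exists>w. w \<notin> p \<and> t w (t 1 0 - t 1 m') = 0)"
    proof
      assume "\<exists>w. w \<notin> p \<and> t w (t u' n - t 1 m') = 0"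
      then obtain w where w: "w \<notin> p" and h: "t w (t u' n - t 1 m') = 0" by blast
      have "t (v * w) (t u' n - t 1 m') = 0" using h simps by (metis mult.commute)
      moreover have "t (v * w) (t u' n) = 0" using v simps by (metis mult.commute mult.left_commute)
      ultimately have "t (v * w) (t 1 0 - t 1 m') = 0" using simps by (simp add: algebra_simps)
      then show "\<exists>w. w \<notin> p \<and> t w (t 1 0 - t 1 m') = 0" using pr[OF v(1) w] by blast
    next
      assume "\<exists>w. w \<notin> p \<and> t w (t 1 0 - t 1 m') = 0"
      then obtain w where w: "w \<notin> p" and h: "t w (t 1 0 - t 1 m') = 0" by blast
      have "t (v * w) (t 1 0 - t 1 m') = 0" using h simps by (metis mult.commute)
      moreover have "t (v * w) (t u' n) = 0" using v simps by (metis mult.commute mult.left_commute)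
      moreover have "t (v * w) (t 1 0) = 0" using simps by simp
      ultimately have "t (v * w) (t 1 m') = 0" using module.scale_right_diff_distrib[OF mt, of "v * w" "t 1 0" "t 1 m'"] by simp
      then have "t (v * w) (t u' n - t 1 m') = 0"
        using module.scale_right_diff_distrib[OF mt, of "v * w" "t u' n" "t 1 m'"] \<open>t (v * w) (t u' n) = 0\<close> by simp
      then show "\<exists>w. w \<notin> p \<and> t w (t u' n - t 1 m') = 0" using pr[OF v(1) w] by blast
    qed
    show "z \<in> frac t p n 1 \<longleftrightarrow> z \<in> frac t p 0 1"
      unfolding z frac_def using A module.scale_zero_right[OF mt] by simp
  qed
qed



lemma Supp_char:
  fixes sM :: "'r::comm_ring_1 \<Rightarrow> 'm::ab_group_add \<Rightarrow> 'm"
  assumes ms: "module sM" and fa: "faithful sM" and pf: "primeful sM" and ne: "Spec_mod sM \<noteq> {}"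
  shows "Supp sM (Spec_mod sM - V_mod sM K) = {p. prime_ideal p \<and> \<not> colon sM K \<subseteq> p}"
proof (rule set_eqI iffI)+
  fix p assume "p \<in> Supp sM (Spec_mod sM - V_mod sM K)"
  then obtain P where P: "P \<in> Spec_mod sM" "P \<notin> V_mod sM K" "p = colon sM P"
    unfolding Supp_def by auto
  have "prime_ideal p" using prime_colon[OF ms] P by (auto simp: Spec_mod_def)
  moreover have "\<not> colon sM K \<subseteq> p" using P by (auto simp: V_mod_def)
  ultimately show "p \<in> {p. prime_ideal p \<and> \<not> colon sM K \<subseteq> p}" by simp
next
  fix p assume p: "p \<in> {p. prime_ideal p \<and> \<not> colon sM K \<subseteq> p}"
  obtain P0 where P0: "prime_submodule sM P0" using ne by (auto simp: Spec_mod_def)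
  have "(UNIV :: 'm set) \<noteq> {0}"
  proof
    assume u: "(UNIV :: 'm set) = {0}"
    have "0 \<in> P0" using P0 module.subspace_0[OF ms] by (auto simp: prime_submodule_def)
    have "x = 0" for x :: 'm using u by (metis UNIV_I singletonD)
    then have "P0 = UNIV" using \<open>0 \<in> P0\<close> by (metis UNIV_eq_I)
    then show False using P0 by (auto simp: prime_submodule_def)
  qed
  then have surj: "\<forall>p. prime_ideal p \<and> ann sM \<subseteq> p \<longrightarrow> (\<exists>P\<in>Spec_mod sM. colon sM P = p)"
    using pf by (auto simp: primeful_def)
  have "ann sM \<subseteq> p" using fa p by (auto simp: faithful_def prime_ideal_def is_ideal_def)
  then obtain P where P: "P \<in> Spec_mod sM" "colon sM P = p" using surj p by blast
  then have "P \<notin> V_mod sM K" using p by (auto simp: V_mod_def)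
  then show "p \<in> Supp sM (Spec_mod sM - V_mod sM K)" using P unfolding Supp_def by blast
qed

lemma ker_char:
  "ker_eps s t U = {n. \<forall>p\<in>Supp s U. frac t p n 1 = frac t p 0 1}"
  unfolding ker_eps_def eps_def
  by (auto simp: fun_eq_iff)

theorem proposition3p8:
  fixes sM :: "'r::comm_ring_1 \<Rightarrow> 'm::ab_group_add \<Rightarrow> 'm"
    and sN :: "'r \<Rightarrow> 'n::ab_group_add \<Rightarrow> 'n"
    and K :: "'m set"
  assumes "noetherian_ring TYPE('r)"
    and "module sM" and "faithful sM" and "primeful sM" and "Spec_mod sM \<noteq> {}"
    and "module sN"
    and "module.subspace sM K"
  shows "Gamma sN (colon sM K) UNIV = ker_eps sM sN (Spec_mod sM - V_mod sM K)
     \<and> torsion sN (colon sM K) (ker_eps sM sN (Spec_mod sM - V_mod sM K))"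
proof -
  note noeth = assms(1) and ms = assms(2) and mt = assms(6)
  define I where "I = colon sM K"
  have Iid: "is_ideal I" unfolding I_def by (rule colon_is_ideal[OF ms assms(7)])
  have S: "Supp sM (Spec_mod sM - V_mod sM K) = {p. prime_ideal p \<and> \<not> I \<subseteq> p}"
    unfolding I_def by (rule Supp_char[OF ms assms(3,4,5)])
  have ker: "ker_eps sM sN (Spec_mod sM - V_mod sM K) = {n. \<forall>p. prime_ideal p \<and> \<not> I \<subseteq> p \<longrightarrow> (\<exists>v. v \<notin> p \<and> sN v n = 0)}"
    unfolding ker_char S using frac_eq[OF mt] by auto
  have eq: "Gamma sN I UNIV = ker_eps sM sN (Spec_mod sM - V_mod sM K)"
  proof (rule set_eqI iffI)+
    fix n assume "n \<in> Gamma sN I UNIV"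
    then obtain k where k: "k \<ge> 1" "\<forall>r\<in>ideal_pow I k. sN r n = 0" unfolding Gamma_def by auto
    show "n \<in> ker_eps sM sN (Spec_mod sM - V_mod sM K)"
      unfolding ker
    proof (intro CollectI allI impI)
      fix p assume p: "prime_ideal p \<and> \<not> I \<subseteq> p"
      then obtain a where a: "a \<in> I" "a \<notin> p" by auto
      have "a ^ k \<notin> p" using prime_pow p a by blast
      moreover have "sN (a ^ k) n = 0" using k pow_in_ideal_pow[OF a(1)] by blast
      ultimately show "\<exists>v. v \<notin> p \<and> sN v n = 0" by blast
    qed
  next
    fix n assume "n \<in> ker_eps sM sN (Spec_mod sM - V_mod sM K)"
    then have nk: "\<forall>p. prime_ideal p \<and> \<not> I \<subseteq> p \<longrightarrow> (\<exists>v. v \<notin> p \<and> sN v n = 0)" unfolding ker by simp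
    define J where "J = {r. sN r n = 0}"
    have Jid: "is_ideal J" unfolding J_def by (rule ann_elem_ideal[OF mt])
    have rad: "\<forall>a\<in>I. \<exists>m. a ^ m \<in> J"
    proof (rule ballI, rule ccontr)
      fix a assume a: "a \<in> I" and "\<not> (\<exists>m. a ^ m \<in> J)"
      then obtain p where p: "prime_ideal p" "J \<subseteq> p" "a \<notin> p" using krull[OF Jid] by blast
      then have "\<not> I \<subseteq> p" using a by blast
      then obtain v where "v \<notin> p" "sN v n = 0" using nk p by blast
      then show False using p unfolding J_def by blast
    qed
    obtain F where F: "finite F" "I = ideal_gen F" using noeth Iid unfolding noetherian_ring_def by blast
    have "\<forall>f\<in>F. \<exists>m. f ^ m \<in> J" using rad F ideal_gen_base by blast
    then obtain k where k: "Pp (ideal_gen F) k J" using Pp_finite[OF F(1) Jid] by blast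
    then have "Pp (ideal_gen F) (Suc k) J" unfolding Pp_def by auto
    then have "ideal_pow (ideal_gen F) (Suc k) \<subseteq> J" by (rule Pp_pow[OF Jid])
    then have "ideal_pow I (Suc k) \<subseteq> J" by (simp only: F(2))
    then show "n \<in> Gamma sN I UNIV" unfolding Gamma_def J_def
      by (intro CollectI conjI exI[of _ "Suc k"]) auto
  qed
  moreover have "torsion sN I (ker_eps sM sN (Spec_mod sM - V_mod sM K))"
    unfolding torsion_def eq[symmetric] by (auto simp: Gamma_def)
  ultimately show ?thesis unfolding I_def by simp
qed


end
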